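(* Let $G=(V,E)$ be a simple undirected graph with $V=[n]$ and let $k\ge 1$ be an integer. The problem $$\max_{Z\in\mathbb S^n,\;X\in\mathbb R^{n\times k}} \langle I,Z\rangle \ \text{ s.t. } Z_{ij}=0\ (\{i,j\}\in E),\ Z_{ii}\le 1\ (i\in[n]),\ Z_{ii}=\sum_{r\in[k]}X_{ir}\ (i\in[n]),\ Z\ge0,\ X\ge 0,\ \begin{bmatrix}I_k&X^{\top}\\ X&Z\end{bmatrix}\succeq0$$ is equivalent to (has the same optimal value as) the problem $$\theta^3_k(G)=\max_{Z\in\mathbb S^n}\langle I,Z\rangle \ \text{ s.t. } Z_{ij}=0\ (\{i,j\}\in E),\ Z_{ii}\le 1\ (i\in[n]),\ Z\ge 0,\ \begin{bmatrix}k&\mathrm{diag}(Z)^{\top}\\ \mathrm{diag}(Z)&Z\end{bmatrix}\succeq 0,$$ and the latter problem is strictly feasible.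
   Context: $\mathbb S^n$ is the space of real symmetric $n\times n$ matrices; $\langle A,B\rangle=\mathrm{trace}(AB)$; $\mathrm{diag}(Z)$ is the vector of diagonal entries of $Z$; $\ge 0$ denotes entrywise nonnegativity and $\succeq0$ positive semidefiniteness. Strict feasibility means there is a feasible $Z$ for which the matrix in the semidefinite constraint is positive definite. *)

theory Defs
  imports "HOL-Analysis.Analysis"
begin

definition psd :: "real^'m^'m \<Rightarrow> bool" where
  "psd M \<longleftrightarrow> transpose M = M \<and> (\<forall>x. 0 \<le> x \<bullet> (M *v x))"

definition pd :: "real^'m^'m \<Rightarrow> bool" where
  "pd M \<longleftrightarrow> transpose M = M \<and> (\<forall>x. x \<noteq> 0 \<longrightarrow> 0 < x \<bullet> (M *v x))"

definition blockIX :: "real^'k^'n \<Rightarrow> real^'n^'n \<Rightarrow> real^('k + 'n)^('k + 'n)" where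
  "blockIX X Z = (\<chi> p q. case (p, q) of
      (Inl a, Inl b) \<Rightarrow> (if a = b then 1 else 0)
    | (Inl a, Inr j) \<Rightarrow> X $ j $ a
    | (Inr i, Inl b) \<Rightarrow> X $ i $ b
    | (Inr i, Inr j) \<Rightarrow> Z $ i $ j)"

definition blockKD :: "real \<Rightarrow> real^'n^'n \<Rightarrow> real^(unit + 'n)^(unit + 'n)" where
  "blockKD k Z = (\<chi> p q. case (p, q) of
      (Inl _, Inl _) \<Rightarrow> k
    | (Inl _, Inr j) \<Rightarrow> Z $ j $ j
    | (Inr i, Inl _) \<Rightarrow> Z $ i $ i
    | (Inr i, Inr j) \<Rightarrow> Z $ i $ j)"

text \<open>Feasible set of the lifted problem (with the n x k matrix X); k = CARD('k).\<close>
definition feasX :: "('n::finite \<Rightarrow> 'n \<Rightarrow> bool) \<Rightarrow> ((real^'n^'n) \<times> (real^'k::finite^'n)) set" where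
  "feasX E = {(Z, X). transpose Z = (Z::real^'n^'n)
      \<and> (\<forall>i j. E i j \<longrightarrow> Z $ i $ j = 0)
      \<and> (\<forall>i. Z $ i $ i \<le> 1)
      \<and> (\<forall>i. Z $ i $ i = (\<Sum>r\<in>UNIV. (X::real^'k^'n) $ i $ r))
      \<and> (\<forall>i j. 0 \<le> Z $ i $ j)
      \<and> (\<forall>i r. 0 \<le> X $ i $ r)
      \<and> psd (blockIX X Z)}"

definition feas3 :: "('n::finite \<Rightarrow> 'n \<Rightarrow> bool) \<Rightarrow> real \<Rightarrow> (real^'n^'n) set" where
  "feas3 E k = {Z. transpose Z = Z
      \<and> (\<forall>i j. E i j \<longrightarrow> Z $ i $ j = 0)
      \<and> (\<forall>i. Z $ i $ i \<le> 1)
      \<and> (\<forall>i j. 0 \<le> Z $ i $ j)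
      \<and> psd (blockKD k Z)}"

definition optX :: "('n::finite \<Rightarrow> 'n \<Rightarrow> bool) \<Rightarrow> 'k::finite itself \<Rightarrow> real" where
  "optX E (_::'k itself) = Sup ((\<lambda>(Z, X::real^'k^'n). trace Z) ` feasX E)"

definition theta3 :: "('n::finite \<Rightarrow> 'n \<Rightarrow> bool) \<Rightarrow> real \<Rightarrow> real" where
  "theta3 E k = Sup (trace ` feas3 E k)"

end

theory Submission
  imports Defs
begin

lemma sum_UNIV_Plus: "sum f (UNIV::('a::finite + 'b::finite) set) = (\<Sum>a\<in>UNIV. f (Inl a)) + (\<Sum>b\<in>UNIV. f (Inr b))"
  by (subst UNIV_Plus_UNIV[symmetric], subst sum.Plus) (auto simp: o_def)

lemma qIX: fixes X :: "real^'k::finite^'n::finite" and x :: "real^('k+'n)"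
  shows "x \<bullet> (blockIX X Z *v x) = (\<Sum>a\<in>UNIV. (x$Inl a)^2)
     + 2 * (\<Sum>i\<in>UNIV. \<Sum>a\<in>UNIV. x$Inr i * X$i$a * x$Inl a)
     + (\<Sum>i\<in>UNIV. \<Sum>j\<in>UNIV. x$Inr i * Z$i$j * x$Inr j)"
  unfolding inner_vec_def matrix_vector_mult_def blockIX_def
  apply (simp add: sum_UNIV_Plus sum_distrib_left sum_distrib_right algebra_simps power2_eq_square
      sum.distrib if_distrib cong: if_cong)
  apply (subst sum.swap, simp add: algebra_simps)
  apply (simp only: sum_distrib_left)
  done

lemma qKD: fixes x :: "real^(unit+'n::finite)"
  shows "x \<bullet> (blockKD k Z *v x) = k * (x$Inl ())^2
     + 2 * (\<Sum>i\<in>UNIV. Z$i$i * x$Inr i * x$Inl ())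
     + (\<Sum>i\<in>UNIV. \<Sum>j\<in>UNIV. x$Inr i * Z$i$j * x$Inr j)"
  unfolding inner_vec_def matrix_vector_mult_def blockKD_def
  by (simp add: sum_UNIV_Plus sum_distrib_left sum_distrib_right algebra_simps power2_eq_square
      sum.distrib UNIV_unit)

lemma transIX: "transpose Z = Z \<Longrightarrow> transpose (blockIX X Z) = blockIX X Z"
  unfolding transpose_def blockIX_def vec_eq_iff
  by (auto split: sum.splits)

lemma transKD: "transpose Z = Z \<Longrightarrow> transpose (blockKD k Z) = blockKD k Z"
  unfolding transpose_def blockKD_def vec_eq_iff
  by (auto split: sum.splits)

lemma cs_card: fixes u :: "'k::finite \<Rightarrow> real"
  shows "(\<Sum>a\<in>UNIV. u a)^2 / real CARD('k) \<le> (\<Sum>a\<in>UNIV. (u a)^2)"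
proof -
  define s where "s = (\<Sum>a\<in>UNIV. u a)"
  define K where "K = real CARD('k)"
  have K: "K > 0" unfolding K_def by simp
  have "0 \<le> (\<Sum>a\<in>UNIV. (u a - s/K)^2)" by (simp add: sum_nonneg)
  also have "\<dots> = (\<Sum>a\<in>UNIV. (u a)^2) - 2 * (s/K) * s + K * ((s/K)^2)"
    by (simp add: power2_diff sum.distrib sum_subtractf s_def K_def
        flip: sum_distrib_right sum_distrib_left)
     (simp flip: sum_divide_distrib sum_distrib_right sum_distrib_left)
  finally show ?thesis using K unfolding s_def[symmetric] K_def[symmetric]
    by (simp add: power2_eq_square field_simps)
qed


lemma feasX_feas3:
  fixes X :: "real^'k::finite^'n::finite"
  assumes "(Z, X) \<in> feasX E"
  shows "Z \<in> feas3 E (real CARD('k))"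
proof -
  have sym: "transpose Z = Z" and psdX: "psd (blockIX X Z)"
    and dg: "\<And>i. Z $ i $ i = (\<Sum>r\<in>UNIV. X $ i $ r)"
    using assms unfolding feasX_def by auto
  have "0 \<le> x \<bullet> (blockKD (real CARD('k)) Z *v x)" for x :: "real^(unit+'n)"
  proof -
    define w :: "real^('k+'n)" where
      "w = (\<chi> p. case p of Inl a \<Rightarrow> x$Inl () | Inr i \<Rightarrow> x$Inr i)"
    have "0 \<le> w \<bullet> (blockIX X Z *v w)" using psdX unfolding psd_def by blast
    also have "\<dots> = x \<bullet> (blockKD (real CARD('k)) Z *v x)"
    proof -
      have e: "(\<Sum>a\<in>UNIV. x$Inr i * X$i$a * t) = Z$i$i * x$Inr i * t" for i t
      proof -
        have "(\<Sum>a\<in>UNIV. x$Inr i * X$i$a * t) = (x$Inr i * t) * (\<Sum>a\<in>UNIV. X$i$a)"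
          unfolding sum_distrib_left by (rule sum.cong) auto
        also have "\<dots> = Z$i$i * x$Inr i * t" by (simp only: dg[symmetric] mult_ac)
        finally show ?thesis .
      qed
      show ?thesis unfolding qIX qKD w_def by (simp add: e)
    qed
    finally show ?thesis .
  qed
  then show ?thesis using assms transKD[OF sym] unfolding feasX_def feas3_def psd_def by auto
qed

lemma feas3_feasX:
  assumes "Z \<in> feas3 E (real CARD('k::finite))"
  shows "(Z, (\<chi> i r. Z$i$i / real CARD('k)) :: real^'k^'n::finite) \<in> feasX E"
proof -
  define K where "K = real CARD('k)"
  have K: "K > 0" unfolding K_def by simp
  define X :: "real^'k^'n" where "X = (\<chi> i r. Z$i$i / K)"
  have sym: "transpose Z = Z" and psdK: "psd (blockKD K Z)"
    and nn: "\<And>i j. 0 \<le> Z$i$j"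
    using assms unfolding feas3_def K_def by auto
  have "0 \<le> x \<bullet> (blockIX X Z *v x)" for x :: "real^('k+'n)"
  proof -
    define s where "s = (\<Sum>a\<in>UNIV. x$Inl a)"
    define w :: "real^(unit+'n)" where
      "w = (\<chi> p. case p of Inl _ \<Rightarrow> s / K | Inr i \<Rightarrow> x$Inr i)"
    have "0 \<le> w \<bullet> (blockKD K Z *v w)" using psdK unfolding psd_def by blast
    also have "\<dots> = s^2/K + 2 * (\<Sum>i\<in>UNIV. Z$i$i * x$Inr i * s / K)
       + (\<Sum>i\<in>UNIV. \<Sum>j\<in>UNIV. x$Inr i * Z$i$j * x$Inr j)"
      unfolding qKD w_def using K by (simp add: power2_eq_square)
    also have "\<dots> \<le> x \<bullet> (blockIX X Z *v x)"
    proof -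
      have c: "(\<Sum>i\<in>UNIV. \<Sum>a\<in>UNIV. x$Inr i * X$i$a * x$Inl a) = (\<Sum>i\<in>UNIV. Z$i$i * x$Inr i * s / K)"
      proof (rule sum.cong[OF refl])
        fix i
        have "(\<Sum>a\<in>UNIV. x$Inr i * X$i$a * x$Inl a) = (x$Inr i * (Z$i$i / K)) * s"
          unfolding s_def sum_distrib_left by (rule sum.cong) (simp_all add: X_def)
        also have "\<dots> = Z$i$i * x$Inr i * s / K" by simp
        finally show "(\<Sum>a\<in>UNIV. x$Inr i * X$i$a * x$Inl a) = Z$i$i * x$Inr i * s / K" .
      qed
      have "s^2/K \<le> (\<Sum>a\<in>UNIV. (x$Inl a)^2)"
        using cs_card[of "\<lambda>a. x$Inl a"] unfolding s_def K_def by simp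
      then show ?thesis unfolding qIX c by simp
    qed
    finally show ?thesis .
  qed
  then have "psd (blockIX X Z)" using transIX[OF sym] unfolding psd_def by auto
  moreover have "\<forall>i. Z $ i $ i = (\<Sum>r\<in>UNIV. X $ i $ r)"
  proof
    fix i
    have "(\<Sum>r\<in>UNIV. X $ i $ r) = (\<Sum>r\<in>(UNIV::'k set). Z$i$i / K)" by (simp add: X_def)
    also have "\<dots> = K * (Z$i$i / K)" by (simp add: K_def)
    also have "\<dots> = Z$i$i" using K by simp
    finally show "Z $ i $ i = (\<Sum>r\<in>UNIV. X $ i $ r)" by simp
  qed
  moreover have "\<forall>i r. 0 \<le> X $ i $ r" unfolding X_def using nn K by simp
  ultimately have "(Z, X) \<in> feasX E" using assms unfolding feasX_def feas3_def by auto
  then show ?thesis unfolding X_def K_def .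
qed


lemma strict_feas:
  fixes E :: "'n::finite \<Rightarrow> 'n \<Rightarrow> bool"
  assumes irr: "\<And>i. \<not> E i i" and K1: "1 \<le> K"
  shows "\<exists>Z \<in> feas3 E K. pd (blockKD K Z)"
proof -
  define n where "n = real CARD('n)"
  define e where "e = 1 / (n + 1)"
  have n0: "n \<ge> 0" unfolding n_def by simp
  have e0: "e > 0" "e \<le> 1" using n0 unfolding e_def by auto
  have ne: "n * e < 1" using n0 unfolding e_def by (simp add: field_simps)
  define Z :: "real^'n^'n" where "Z = (\<chi> i j. if i = j then e else 0)"
  have q: "x \<bullet> (blockKD K Z *v x) = (\<Sum>i\<in>UNIV. e * (x$Inr i + x$Inl ())^2) + (K - n*e) * (x$Inl ())^2"
    for x :: "real^(unit+'n)"
  proof -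
    define t where "t = x$Inl ()"
    have a: "(\<Sum>j\<in>UNIV. x$Inr i * Z$i$j * x$Inr j) = e * (x$Inr i)^2" for i
    proof -
      have "(\<Sum>j\<in>UNIV. x$Inr i * Z$i$j * x$Inr j) = (\<Sum>j\<in>UNIV. if i = j then e * (x$Inr i)^2 else 0)"
        by (rule sum.cong) (auto simp: Z_def power2_eq_square)
      then show ?thesis by simp
    qed
    have b: "(\<Sum>i\<in>UNIV. e * (x$Inr i + t)^2) = (\<Sum>i\<in>UNIV. e * (x$Inr i)^2) + 2 * (\<Sum>i\<in>UNIV. e * x$Inr i * t) + n * e * t^2"
      unfolding n_def power2_sum by (simp add: sum.distrib distrib_left sum_distrib_left mult_ac)
    have c: "(\<Sum>i\<in>UNIV. Z$i$i * x$Inr i * t) = (\<Sum>i\<in>UNIV. e * x$Inr i * t)"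
      unfolding Z_def by simp
    show ?thesis unfolding qKD a b c t_def[symmetric] by (simp add: algebra_simps)
  qed
  have "Z \<in> feas3 E K \<and> pd (blockKD K Z)"
  proof -
    have sym: "transpose Z = Z" unfolding Z_def transpose_def by (simp add: vec_eq_iff)
    have pos: "0 < x \<bullet> (blockKD K Z *v x)" if nz: "x \<noteq> 0" for x :: "real^(unit+'n)"
    proof (cases "x$Inl () = 0")
      case True
      obtain p where p: "x$p \<noteq> 0" using nz by (auto simp: vec_eq_iff)
      then obtain i where i: "p = Inr i" using True by (cases p) auto
      have "0 < e * (x$Inr i + x$Inl ())^2" using p i True e0 by simp
      also have "\<dots> \<le> (\<Sum>i\<in>UNIV. e * (x$Inr i + x$Inl ())^2)"
        by (rule member_le_sum) (use e0 in auto)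
      finally show ?thesis unfolding q using True by simp
    next
      case False
      have "0 < (K - n*e) * (x$Inl ())^2" using False ne K1 by simp
      moreover have "0 \<le> (\<Sum>i\<in>UNIV. e * (x$Inr i + x$Inl ())^2)"
        by (rule sum_nonneg) (use e0 in auto)
      ultimately show ?thesis unfolding q by simp
    qed
    have pd: "pd (blockKD K Z)" unfolding pd_def using transKD[OF sym] pos by auto
    have "psd (blockKD K Z)" unfolding psd_def using transKD[OF sym] pos
      by (metis inner_zero_left order.strict_implies_order order_refl)
    moreover have "\<forall>i j. E i j \<longrightarrow> Z $ i $ j = 0" unfolding Z_def using irr by auto
    moreover have "\<forall>i. Z $ i $ i \<le> 1" "\<forall>i j. 0 \<le> Z $ i $ j" unfolding Z_def using e0 by auto
    ultimately show ?thesis using sym pd unfolding feas3_def by auto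
  qed
  then show ?thesis by blast
qed

theorem theorem5:
  fixes E :: "'n::finite \<Rightarrow> 'n \<Rightarrow> bool"
  assumes "\<And>i j. E i j \<Longrightarrow> E j i"
    and "\<And>i. \<not> E i i"
  shows "optX E TYPE('k::finite) = theta3 E (real CARD('k))
         \<and> (\<exists>Z \<in> feas3 E (real CARD('k)). pd (blockKD (real CARD('k)) Z))"
proof
  have "(\<lambda>(Z, X::real^'k^'n). trace Z) ` feasX E = trace ` feas3 E (real CARD('k))"
  proof
    show "(\<lambda>(Z, X::real^'k^'n). trace Z) ` feasX E \<subseteq> trace ` feas3 E (real CARD('k))"
      using feasX_feas3 by fastforce
    show "trace ` feas3 E (real CARD('k)) \<subseteq> (\<lambda>(Z, X::real^'k^'n). trace Z) ` feasX E"
    proof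
      fix v assume "v \<in> trace ` feas3 E (real CARD('k))"
      then obtain Z where Z: "Z \<in> feas3 E (real CARD('k))" "v = trace Z" by auto
      have "(Z, (\<chi> i r. Z$i$i / real CARD('k)) :: real^'k^'n) \<in> feasX E"
        by (rule feas3_feasX[OF Z(1)])
      then show "v \<in> (\<lambda>(Z, X::real^'k^'n). trace Z) ` feasX E"
        using Z(2) by (auto intro!: image_eqI)
    qed
  qed
  then show "optX E TYPE('k::finite) = theta3 E (real CARD('k))"
    unfolding optX_def theta3_def by simp
  show "\<exists>Z \<in> feas3 E (real CARD('k)). pd (blockKD (real CARD('k)) Z)"
    by (rule strict_feas) (use assms in auto)
qed

end
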